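(* In the replace-after-fixed-time process with parameters $\lambda>0$, $r>0$, for every integer $n\ge1$ and every $t\in[nr,(n+1)r)$, \[ \frac{E[N(t)]}{t}=\lambda(1+u_n)+\frac{u_n-\lambda r v_n}{t}, \] where \[ u_n=\sum_{k=1}^n e^{-\lambda k r}=\frac{e^{-\lambda r}}{1-e^{-\lambda r}}\big(1-e^{-\lambda n r}\big),\qquad v_n=\sum_{k=1}^n k e^{-\lambda k r}=\frac{e^{-\lambda r}}{(1-e^{-\lambda r})^2}\big(1-(n+1)e^{-\lambda n r}+n e^{-\lambda(n+1)r}\big). \]
   Context: Let $X_1,X_2,\ldots$ be independent random variables, each exponentially distributed with rate $\lambda>0$ (density $\lambda e^{-\lambda x}$ for $x>0$). Fix $r>0$ and set $Y_k=\min(X_k,r)$. For $t\ge 0$ let $N(t)=\max\{n\ge 0:\sum_{k=1}^n Y_k\le t\}$ (the replace-after-fixed-time, or RaFT, process). *)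

theory Defs
  imports "HOL-Probability.Probability"
begin

definition raft_count :: "(nat \<Rightarrow> 'a \<Rightarrow> real) \<Rightarrow> real \<Rightarrow> real \<Rightarrow> 'a \<Rightarrow> nat" where
  "raft_count X r t \<omega> = Max {n. (\<Sum>k\<in>{1..n}. min (X k \<omega>) r) \<le> t}"

end

theory Submission
  imports Defs
begin

locale raft = prob_space M for M :: "'a measure" +
  fixes X :: "nat \<Rightarrow> 'a \<Rightarrow> real" and l r :: real
  assumes indep: "indep_vars (\<lambda>_. borel) X {1..}"
    and distr: "\<And>k. k \<ge> 1 \<Longrightarrow> distributed M lborel (X k) (exponential_density l)"
    and lpos: "l > 0" and rpos: "r > 0"
begin

definition Y :: "nat \<Rightarrow> 'a \<Rightarrow> real" where "Y k \<omega> = min (X k \<omega>) r"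
definition S :: "nat \<Rightarrow> 'a \<Rightarrow> real" where "S k \<omega> = (\<Sum>i\<in>{1..k}. Y i \<omega>)"
definition G :: "nat \<Rightarrow> real \<Rightarrow> real" where "G k t = prob {\<omega>\<in>space M. S k \<omega> \<le> t}"
definition mu :: "real measure" where
  "mu = distr (density lborel (exponential_density l)) borel (\<lambda>x. min x r)"

lemma X_meas[measurable]: "k \<ge> 1 \<Longrightarrow> X k \<in> borel_measurable M"
  using distr[of k] by (auto dest: distributed_measurable)

lemma X_meas'[measurable]: "k \<in> {1..} \<Longrightarrow> X k \<in> borel_measurable M"
  by (auto intro: X_meas)

lemma Y_meas[measurable]: "k \<ge> 1 \<Longrightarrow> Y k \<in> borel_measurable M"
  unfolding Y_def[abs_def] by measurable

lemma S_meas[measurable]: "S k \<in> borel_measurable M"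
  unfolding S_def[abs_def] by (intro borel_measurable_sum) (auto intro: Y_meas)

lemma S_Suc: "S (Suc k) \<omega> = S k \<omega> + Y (Suc k) \<omega>"
  unfolding S_def by simp

lemma prob_space_mu: "prob_space mu"
  unfolding mu_def using lpos by (intro prob_space.prob_space_distr prob_space_exponential_density) auto

lemma sets_mu[simp, measurable_cong]: "sets mu = sets borel"
  unfolding mu_def by simp

lemma distr_Y: "k \<ge> 1 \<Longrightarrow> distr M borel (Y k) = mu"
proof -
  assume k: "k \<ge> 1"
  have "distr M borel (Y k) = distr (distr M lborel (X k)) borel (\<lambda>x. min x r)"
    unfolding Y_def[abs_def] using k by (subst distr_distr) (auto simp: comp_def)
  also have "distr M lborel (X k) = density lborel (exponential_density l)"
    using distributed_distr_eq_density[OF distr[OF k]] .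
  finally show ?thesis unfolding mu_def .
qed

lemma indep_Y_S: "indep_var borel (Y (Suc k)) borel (S k)"
proof -
  have "indep_var (PiM {Suc k} (\<lambda>_. borel)) (\<lambda>\<omega>. restrict (\<lambda>i. X i \<omega>) {Suc k})
       (PiM {1..k} (\<lambda>_. borel)) (\<lambda>\<omega>. restrict (\<lambda>i. X i \<omega>) {1..k})"
    by (rule indep_var_restrict[OF indep]) auto
  then have "indep_var borel ((\<lambda>f. min (f (Suc k)) r) \<circ> (\<lambda>\<omega>. restrict (\<lambda>i. X i \<omega>) {Suc k}))
       borel ((\<lambda>f. \<Sum>i\<in>{1..k}. min (f i) r) \<circ> (\<lambda>\<omega>. restrict (\<lambda>i. X i \<omega>) {1..k}))"
    by (rule indep_var_compose) measurable
  also have "((\<lambda>f. min (f (Suc k)) r) \<circ> (\<lambda>\<omega>. restrict (\<lambda>i. X i \<omega>) {Suc k})) = Y (Suc k)"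
    by (auto simp: Y_def fun_eq_iff)
  also have "((\<lambda>f. \<Sum>i\<in>{1..k}. min (f i) r) \<circ> (\<lambda>\<omega>. restrict (\<lambda>i. X i \<omega>) {1..k})) = S k"
    by (auto simp: S_def Y_def fun_eq_iff)
  finally show ?thesis .
qed

lemma G_mono: "mono (G k)"
  unfolding G_def mono_def by (auto intro!: finite_measure_mono)

lemma G_meas[measurable]: "G k \<in> borel_measurable borel"
  by (rule borel_measurable_mono[OF G_mono])

lemma G_nonneg: "0 \<le> G k t" unfolding G_def by simp
lemma G_le1: "G k t \<le> 1" unfolding G_def by simp

lemma G_0: "G 0 t = (if 0 \<le> t then 1 else 0)"
  unfolding G_def S_def by (simp add: prob_space)

lemma G_Suc_nn: "emeasure M {\<omega>\<in>space M. S (Suc k) \<omega> \<le> t} = (\<integral>\<^sup>+y. ennreal (G k (t - y)) \<partial>mu)"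
proof -
  interpret S: prob_space "distr M borel (S k)" by (rule prob_space_distr) measurable
  have ind: "indep_var borel (Y (Suc k)) borel (S k)" by (rule indep_Y_S)
  have eq: "distr M borel (Y (Suc k)) \<Otimes>\<^sub>M distr M borel (S k) = distr M (borel \<Otimes>\<^sub>M borel) (\<lambda>x. (Y (Suc k) x, S k x))"
    using ind unfolding indep_var_distribution_eq by blast
  define A where "A = {p\<in>space (borel \<Otimes>\<^sub>M borel). fst p + snd p \<le> (t::real)}"
  have fm: "(\<lambda>p::real\<times>real. fst p + snd p) \<in> borel_measurable (borel \<Otimes>\<^sub>M borel)" by measurable
  have A[measurable]: "A \<in> sets (borel \<Otimes>\<^sub>M borel)"
  proof -
    have "A = (\<lambda>p::real\<times>real. fst p + snd p) -` {..t} \<inter> space (borel \<Otimes>\<^sub>M borel)"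
      unfolding A_def by auto
    then show ?thesis by (simp only:) (rule measurable_sets[OF fm], simp)
  qed
  have "emeasure M {\<omega>\<in>space M. S (Suc k) \<omega> \<le> t} = emeasure (distr M (borel \<Otimes>\<^sub>M borel) (\<lambda>x. (Y (Suc k) x, S k x))) A"
    by (subst emeasure_distr[OF _ A], measurable) (auto simp: A_def S_Suc space_pair_measure intro!: arg_cong[where f="emeasure M"])
  also have "\<dots> = emeasure (mu \<Otimes>\<^sub>M distr M borel (S k)) A"
    using eq distr_Y[of "Suc k"] by simp
  also have "\<dots> = (\<integral>\<^sup>+y. emeasure (distr M borel (S k)) (Pair y -` A) \<partial>mu)"
    by (rule S.emeasure_pair_measure_alt) (simp add: sets_pair_measure_cong[OF sets_mu refl])
  also have "\<dots> = (\<integral>\<^sup>+y. ennreal (G k (t - y)) \<partial>mu)"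
  proof (rule nn_integral_cong)
    fix y
    have "emeasure (distr M borel (S k)) (Pair y -` A) = emeasure M {\<omega>\<in>space M. S k \<omega> \<le> t - y}"
      by (subst emeasure_distr) (auto simp: A_def space_pair_measure intro!: arg_cong[where f="emeasure M"])
    then show "emeasure (distr M borel (S k)) (Pair y -` A) = ennreal (G k (t - y))"
      unfolding G_def by (simp add: emeasure_eq_measure)
  qed
  finally show ?thesis .
qed

lemma G_Suc: "G (Suc k) t = integral\<^sup>L mu (\<lambda>y. G k (t - y))"
proof -
  have "G (Suc k) t = enn2real (emeasure M {\<omega>\<in>space M. S (Suc k) \<omega> \<le> t})"
    unfolding G_def by (simp add: measure_def)
  also have "\<dots> = integral\<^sup>L mu (\<lambda>y. G k (t - y))"
    by (subst G_Suc_nn, subst integral_eq_nn_integral) (auto simp: G_nonneg)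
  finally show ?thesis .
qed

abbreviation "ed \<equiv> exponential_density l"

lemma ed_meas[measurable]: "ed \<in> borel_measurable borel"
  unfolding exponential_density_def by measurable

lemma ed_nonneg: "0 \<le> ed x" using lpos by (simp add: exponential_density_nonneg)

lemma mu_AE: "AE y in mu. 0 \<le> y \<and> y \<le> r"
proof -
  have "AE x in density lborel ed. 0 \<le> min x r \<and> min x r \<le> r"
    using rpos by (subst AE_density) (auto simp: exponential_density_def)
  then show ?thesis unfolding mu_def
    by (subst AE_distr_iff) auto
qed

lemma mu_integrable:
  fixes f :: "real \<Rightarrow> real" and B :: real
  assumes f[measurable]: "f \<in> borel_measurable borel" and Bf: "\<And>y. 0 \<le> y \<Longrightarrow> y \<le> r \<Longrightarrow> \<bar>f y\<bar> \<le> B"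
  shows "integrable mu f"
proof -
  interpret mu: prob_space mu by (rule prob_space_mu)
  show ?thesis
  proof (rule mu.integrable_const_bound[where B=B])
    show "AE x in mu. norm (f x) \<le> B" using mu_AE by (rule eventually_mono) (use Bf in auto)
  qed (use f in \<open>simp add: measurable_cong_sets[OF sets_mu refl]\<close>)
qed

lemma tail_prob: "measure (density lborel ed) {r<..} = exp (- r * l)"
proof -
  have "measure (density lborel ed) {r<..} = measure (distr M lborel (X 1)) {r<..}"
    using distributed_distr_eq_density[OF distr[of 1]] by simp
  also have "\<dots> = prob {x\<in>space M. r < X 1 x}"
    by (subst measure_distr) (auto intro!: arg_cong[where f=prob])
  also have "\<dots> = exp (- r * l)"
    by (rule exponential_distributedD_gt[OF distr]) (use rpos lpos in auto)
  finally show ?thesis .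
qed

lemma tail_int: "integral\<^sup>L lborel (\<lambda>x. indicator {r<..} x * ed x) = exp (- r * l)"
proof -
  have "integral\<^sup>L lborel (\<lambda>x. indicator {r<..} x * ed x) = enn2real (\<integral>\<^sup>+x. ennreal (indicator {r<..} x * ed x) \<partial>lborel)"
    by (rule integral_eq_nn_integral) (auto simp: ed_nonneg)
  also have "(\<integral>\<^sup>+x. ennreal (indicator {r<..} x * ed x) \<partial>lborel) = emeasure (density lborel ed) {r<..}"
    by (subst emeasure_density) (auto intro!: nn_integral_cong simp: indicator_def)
  finally show ?thesis using tail_prob by (simp add: measure_def)
qed

lemma mu_integral:
  fixes f :: "real \<Rightarrow> real" and B :: real
  assumes f[measurable]: "f \<in> borel_measurable borel" and Bf: "\<And>y. 0 \<le> y \<Longrightarrow> y \<le> r \<Longrightarrow> \<bar>f y\<bar> \<le> B"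
  shows "integral\<^sup>L mu f = (LBINT x=0..r. l * exp (- l * x) * f x) + exp (- l * r) * f r"
proof -
  define g where "g x = ed x * f (min x r)" for x
  have g_meas[measurable]: "g \<in> borel_measurable borel" unfolding g_def[abs_def] by measurable
  have intd: "integrable (density lborel ed) (\<lambda>x. f (min x r))"
    using mu_integrable[of f B] f Bf unfolding mu_def by (subst (asm) integrable_distr_eq) auto
  have intg: "integrable lborel g"
    using intd unfolding g_def by (subst (asm) integrable_density) (auto simp: ed_nonneg)
  have "integral\<^sup>L mu f = integral\<^sup>L (density lborel ed) (\<lambda>x. f (min x r))"
    unfolding mu_def by (subst integral_distr) auto
  also have "\<dots> = integral\<^sup>L lborel g"
    unfolding g_def by (subst integral_density) (auto simp: ed_nonneg)
  also have "g = (\<lambda>x. indicator {0..r} x * g x + indicator {r<..} x * g x)"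
    by (auto simp: fun_eq_iff g_def indicator_def exponential_density_def)
  also have "integral\<^sup>L lborel \<dots> = integral\<^sup>L lborel (\<lambda>x. indicator {0..r} x * g x) + integral\<^sup>L lborel (\<lambda>x. indicator {r<..} x * g x)"
    by (rule Bochner_Integration.integral_add) (use integrable_mult_indicator[OF _ intg] in auto)
  also have "integral\<^sup>L lborel (\<lambda>x. indicator {0..r} x * g x) = (LBINT x=0..r. l * exp (- l * x) * f x)"
  proof -
    have "integral\<^sup>L lborel (\<lambda>x. indicator {0..r} x * g x) = (LBINT x:{0..r}. l * exp (- l * x) * f x)"
      unfolding set_lebesgue_integral_def
      by (rule Bochner_Integration.integral_cong) (auto simp: indicator_def g_def exponential_density_def mult_ac)
    then show ?thesis using rpos interval_integral_Icc[of 0 r "\<lambda>x. l * exp (- l * x) * f x"] by (simp add: zero_ereal_def)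
  qed
  also have "integral\<^sup>L lborel (\<lambda>x. indicator {r<..} x * g x) = f r * integral\<^sup>L lborel (\<lambda>x. indicator {r<..} x * ed x)"
    by (simp only: integral_mult_right_zero[symmetric]) (rule Bochner_Integration.integral_cong, auto simp: indicator_def g_def)
  finally show ?thesis using tail_int by (simp add: mult_ac)
qed

lemma G_neg: "s < 0 \<Longrightarrow> G k s = 0"
proof (induction k arbitrary: s)
  case 0 then show ?case by (simp add: G_0)
next
  case (Suc k)
  have "AE y in mu. G k (s - y) = 0"
    using mu_AE by (rule eventually_mono) (use Suc in auto)
  then show ?case unfolding G_Suc by (rule integral_eq_zero_AE)
qed

end

lemma FTC_real:
  fixes f F :: "real \<Rightarrow> real" and a b :: real
  assumes "a \<le> b" and "\<And>x. (F has_real_derivative f x) (at x)" and "continuous_on {a..b} f"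
  shows "(LBINT x=a..b. f x) = F b - F a"
proof -
  have "(LBINT x=ereal a..ereal b. f x) = F b - F a"
    by (rule interval_integral_FTC_finite)
       (use assms in \<open>auto simp: min_def max_def has_real_derivative_iff_has_vector_derivative[symmetric]
            intro: has_field_derivative_at_within\<close>)
  then show ?thesis by simp
qed

lemma FTC_real0:
  fixes f F :: "real \<Rightarrow> real" and b :: real
  assumes "0 \<le> b" and "\<And>x. (F has_real_derivative f x) (at x)" and "continuous_on {0..b} f"
  shows "(LBINT x=0..b. f x) = F b - F 0"
  using FTC_real[OF assms] by (simp add: zero_ereal_def)

context raft begin

definition cc :: real where "cc = integral\<^sup>L mu (\<lambda>y. exp (- y))"

lemma cc_eq: "cc = l / (l + 1) - l / (l + 1) * exp (- (l + 1) * r) + exp (- (l + 1) * r)"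
proof -
  have "cc = (LBINT x=0..r. l * exp (- l * x) * exp (- x)) + exp (- l * r) * exp (- r)"
    unfolding cc_def by (rule mu_integral[where B=1]) auto
  also have "(LBINT x=0..r. l * exp (- l * x) * exp (- x)) = 
     (- l / (l + 1) * exp (- (l + 1) * r)) - (- l / (l + 1) * exp (- (l + 1) * 0))"
    using rpos lpos
    apply (intro FTC_real0)
      apply simp
     apply (rule derivative_eq_intros refl | simp)+
     apply (simp add: field_simps exp_add[symmetric] exp_minus)
    apply (intro continuous_intros)
    done
  also have "exp (- l * r) * exp (- r) = exp (- (l + 1) * r)" by (simp add: mult_exp_exp algebra_simps)
  finally show ?thesis by simp
qed

lemma cc_lt1: "cc < 1"
proof -
  have "(l + 1) * r > 0" using lpos rpos by simp
  then have "- (l + 1) * r < 0" by linarith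
  then have e: "exp (- (l + 1) * r) < 1" by (subst exp_less_one_iff) 
  have alg: "l / (l + 1) - l / (l + 1) * E + E = (l + E) / (l + 1)" for E
    using lpos by (simp add: divide_simps) (simp add: algebra_simps)
  have "cc = (l + exp (- (l + 1) * r)) / (l + 1)"
    unfolding cc_eq by (rule alg)
  also have "\<dots> < 1" using e lpos by (simp add: field_simps)
  finally show ?thesis .
qed

lemma G_bound: "G k t \<le> exp t * cc ^ k"
proof (induction k arbitrary: t)
  case 0 then show ?case by (auto simp: G_0)
next
  case (Suc k)
  have "G (Suc k) t = integral\<^sup>L mu (\<lambda>y. G k (t - y))" by (rule G_Suc)
  also have "\<dots> \<le> integral\<^sup>L mu (\<lambda>y. exp t * cc ^ k * exp (- y))"
  proof (rule integral_mono)
    show "integrable mu (\<lambda>y. G k (t - y))"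
      by (rule mu_integrable[where B=1]) (auto simp: G_nonneg G_le1)
    show "integrable mu (\<lambda>y. exp t * cc ^ k * exp (- y))"
      by (intro integrable_mult_right mu_integrable[where B=1]) auto
    fix y show "G k (t - y) \<le> exp t * cc ^ k * exp (- y)"
      using Suc[of "t - y"] by (simp add: exp_diff exp_minus field_simps)
  qed
  also have "\<dots> = exp t * cc ^ Suc k" unfolding cc_def by simp
  finally show ?case .
qed

lemma cc_nonneg: "0 \<le> cc" unfolding cc_def by (rule integral_nonneg_AE) auto

lemma G_summable: "summable (\<lambda>k. G k t)"
proof (rule summable_comparison_test[where g="\<lambda>k. exp t * cc ^ k"])
  show "\<exists>N. \<forall>n\<ge>N. norm (G n t) \<le> exp t * cc ^ n" using G_bound G_nonneg by auto
  show "summable (\<lambda>k. exp t * cc ^ k)"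
    using cc_nonneg cc_lt1 by (intro summable_mult summable_geometric) auto
qed

definition R :: "real \<Rightarrow> real" where "R t = (\<Sum>k. G k t)"

lemma R_nonneg: "0 \<le> R t" unfolding R_def by (intro suminf_nonneg G_summable G_nonneg)

lemma R_bound: "R t \<le> exp t / (1 - cc)"
proof -
  have "R t \<le> (\<Sum>k. exp t * cc ^ k)" unfolding R_def
    using cc_nonneg cc_lt1 G_bound
    by (intro suminf_le G_summable summable_mult summable_geometric) auto
  also have "\<dots> = exp t * (1 / (1 - cc))"
    using cc_nonneg cc_lt1 by (subst suminf_mult) (auto simp: suminf_geometric summable_geometric)
  finally show ?thesis by simp
qed

lemma R_mono: "mono R"
  unfolding R_def mono_def by (auto intro!: suminf_le G_summable monoD[OF G_mono])

lemma R_meas[measurable]: "R \<in> borel_measurable borel"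
  by (rule borel_measurable_mono[OF R_mono])

lemma R_neg: "t < 0 \<Longrightarrow> R t = 0"
  unfolding R_def by (simp add: G_neg)

lemma R_renewal: "R t = G 0 t + integral\<^sup>L mu (\<lambda>y. R (t - y))"
proof -
  have int: "integrable mu (\<lambda>y. G k (t - y))" for k
    by (rule mu_integrable[where B=1]) (auto simp: G_nonneg G_le1)
  have "R t = (\<Sum>k. G (Suc k) t) + G 0 t"
    unfolding R_def using suminf_split_head[OF G_summable[of t]] by simp
  also have "(\<Sum>k. G (Suc k) t) = (\<Sum>k. integral\<^sup>L mu (\<lambda>y. G k (t - y)))"
    by (simp add: G_Suc)
  also have "\<dots> = integral\<^sup>L mu (\<lambda>y. R (t - y))"
    unfolding R_def
  proof (rule integral_suminf[symmetric])
    show "AE y in mu. summable (\<lambda>k. norm (G k (t - y)))"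
      using G_summable G_nonneg by simp
    show "summable (\<lambda>k. integral\<^sup>L mu (\<lambda>y. norm (G k (t - y))))"
      using G_summable[of t] summable_Suc_iff[of "\<lambda>k. G k t"] by (simp add: G_nonneg G_Suc[symmetric])
  qed (rule int)
  finally show ?thesis by simp
qed

definition uu :: "nat \<Rightarrow> real" where "uu n = (\<Sum>k\<in>{1..n}. exp (- l * real k * r))"
definition vv :: "nat \<Rightarrow> real" where "vv n = (\<Sum>k\<in>{1..n}. real k * exp (- l * real k * r))"
definition seg :: "nat \<Rightarrow> real \<Rightarrow> real" where
  "seg n x = 1 + (uu n - l * r * vv n) + l * (1 + uu n) * x"
definition Hp :: "real \<Rightarrow> real" where
  "Hp x = (if x < 0 then 0 else seg (nat \<lfloor>x / r\<rfloor>) x)"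

lemma uu_Suc: "uu (Suc m) = uu m + exp (- l * real (Suc m) * r)"
  unfolding uu_def by simp
lemma vv_Suc: "vv (Suc m) = vv m + real (Suc m) * exp (- l * real (Suc m) * r)"
  unfolding vv_def by simp
lemma uu_Suc': "uu (Suc m) = exp (- l * r) * (1 + uu m)"
proof (induction m)
  case 0 then show ?case by (simp add: uu_def)
next
  case (Suc m)
  have "exp (- l * r) * exp (- l * real (Suc m) * r) = exp (- l * r + - l * real (Suc m) * r)"
    by (rule exp_add[symmetric])
  also have "- l * r + - l * real (Suc m) * r = - l * real (Suc (Suc m)) * r" by (simp add: algebra_simps)
  finally have "exp (- l * r) * exp (- l * real (Suc m) * r) = exp (- l * real (Suc (Suc m)) * r)" .
  then have "uu (Suc (Suc m)) = exp (- l * r) * (1 + uu m) + exp (- l * r) * exp (- l * real (Suc m) * r)"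
    using uu_Suc[of "Suc m"] Suc.IH by simp
  also have "\<dots> = exp (- l * r) * (1 + uu (Suc m))" by (simp add: uu_Suc[of m] algebra_simps)
  finally show ?case .
qed

lemma uu_bounds: "0 \<le> uu n \<and> uu n \<le> real n"
proof -
  have "uu n \<le> (\<Sum>k\<in>{1..n}. 1)" unfolding uu_def
    using lpos rpos by (intro sum_mono) (simp add: mult_nonneg_nonneg)
  then show ?thesis unfolding uu_def by (auto intro: sum_nonneg)
qed

lemma vv_bounds: "0 \<le> vv n \<and> vv n \<le> real n * real n"
proof -
  have "vv n \<le> (\<Sum>k\<in>{1..n}. real n)" unfolding vv_def
  proof (intro sum_mono)
    fix k assume k: "k \<in> {1..n}"
    have "exp (- l * real k * r) \<le> 1" using lpos rpos by (simp add: mult_nonneg_nonneg)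
    then have "real k * exp (- l * real k * r) \<le> real k * 1" by (intro mult_left_mono) auto
    moreover have "real k \<le> real n" using k by simp
    ultimately show "real k * exp (- l * real k * r) \<le> real n" by linarith
  qed
  then show ?thesis unfolding vv_def by (auto intro: sum_nonneg)
qed

lemma floor_seg: "real n * r \<le> x \<Longrightarrow> x < real (Suc n) * r \<Longrightarrow> nat \<lfloor>x / r\<rfloor> = n"
proof -
  assume a: "real n * r \<le> x" "x < real (Suc n) * r"
  have "real n \<le> x / r" "x / r < real n + 1" using a rpos by (auto simp: field_simps)
  then have "\<lfloor>x / r\<rfloor> = int n" by (intro floor_unique) auto
  then show ?thesis by simp
qed

lemma Hp_seg: "real n * r \<le> x \<Longrightarrow> x < real (Suc n) * r \<Longrightarrow> Hp x = seg n x"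
  using floor_seg[of n x] rpos unfolding Hp_def by (auto intro: order_trans[OF _ mult_nonneg_nonneg])

lemma Hp_meas[measurable]: "Hp \<in> borel_measurable borel"
proof -
  have "(\<lambda>x. seg (nat \<lfloor>x / r\<rfloor>) x) \<in> borel_measurable borel"
    by (rule measurable_compose_countable'[where I=UNIV]) (auto simp: seg_def)
  then show ?thesis unfolding Hp_def by measurable
qed

definition Cb :: "real \<Rightarrow> real" where
  "Cb T = 1 + \<bar>T\<bar> / r + l * r * ((\<bar>T\<bar> / r) * (\<bar>T\<bar> / r)) + l * (1 + \<bar>T\<bar> / r) * \<bar>T\<bar>"

lemma Cb_nonneg: "0 \<le> Cb T"
  unfolding Cb_def using lpos rpos by (intro add_nonneg_nonneg mult_nonneg_nonneg) auto

lemma Hp_bound: "s \<le> T \<Longrightarrow> \<bar>Hp s\<bar> \<le> Cb T"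
proof (cases "s < 0")
  case True then show ?thesis by (simp add: Hp_def Cb_nonneg)
next
  case False
  assume sT: "s \<le> T"
  define n where "n = nat \<lfloor>s / r\<rfloor>"
  have N: "real n \<le> \<bar>T\<bar> / r"
  proof -
    have "real n \<le> s / r" unfolding n_def using False rpos by (simp add: of_nat_nat)
    also have "\<dots> \<le> \<bar>T\<bar> / r" using sT rpos by (simp add: divide_right_mono)
    finally show ?thesis .
  qed
  have N0: "0 \<le> \<bar>T\<bar> / r" using rpos by simp
  have u: "0 \<le> uu n" "uu n \<le> \<bar>T\<bar> / r" using uu_bounds[of n] N by auto
  have v: "0 \<le> vv n" "vv n \<le> (\<bar>T\<bar> / r) * (\<bar>T\<bar> / r)"
    using vv_bounds[of n] mult_mono[OF N N] N0 by auto
  have s: "0 \<le> s" "s \<le> \<bar>T\<bar>" using False sT by auto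
  have lr: "0 \<le> l * r" using lpos rpos by simp
  have "\<bar>Hp s\<bar> = \<bar>1 + (uu n - l * r * vv n) + l * (1 + uu n) * s\<bar>"
    using False unfolding Hp_def seg_def n_def by simp
  also have "\<dots> \<le> 1 + uu n + l * r * vv n + l * (1 + uu n) * s"
    using u v s lpos lr by (auto simp: abs_le_iff intro!: mult_nonneg_nonneg)
  also have "\<dots> \<le> Cb T" unfolding Cb_def
  proof -
    have "l * r * vv n \<le> l * r * ((\<bar>T\<bar> / r) * (\<bar>T\<bar> / r))" using v lr by (intro mult_left_mono) auto
    moreover have "l * (1 + uu n) * s \<le> l * (1 + \<bar>T\<bar> / r) * \<bar>T\<bar>"
      using u s lpos by (intro mult_mono mult_left_mono) auto
    ultimately show "1 + uu n + l * r * vv n + l * (1 + uu n) * s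
        \<le> 1 + \<bar>T\<bar> / r + l * r * (\<bar>T\<bar> / r * (\<bar>T\<bar> / r)) + l * (1 + \<bar>T\<bar> / r) * \<bar>T\<bar>"
      using u by linarith
  qed
  finally show ?thesis .
qed

definition Fs :: "nat \<Rightarrow> real \<Rightarrow> real \<Rightarrow> real" where
  "Fs n t x = (l * r * vv n - l * (1 + uu n) * (t - x)) * exp (- l * x)"

lemma seg_FTC: "\<alpha> \<le> \<beta> \<Longrightarrow> (LBINT x=ereal \<alpha>..ereal \<beta>. l * exp (- l * x) * seg n (t - x)) = Fs n t \<beta> - Fs n t \<alpha>"
proof -
  assume ab: "\<alpha> \<le> \<beta>"
  show ?thesis
  proof (rule FTC_real[OF ab])
    fix x
    show "(Fs n t has_real_derivative l * exp (- l * x) * seg n (t - x)) (at x)"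
      unfolding Fs_def[abs_def] seg_def
      by (rule derivative_eq_intros refl | simp)+ (simp add: algebra_simps)
  qed (simp add: seg_def, intro continuous_intros)
qed

lemma key_alg:
  fixes L R u0 u1 v0 v1 q Q E t s0 N1 :: real
  assumes "u1 = u0 + Q" "v1 = v0 + N1 * Q" "q * (1 + u0) = u0 + Q" "t = s0 + N1 * R"
  shows "1 + (((L * R * v1 - L*(1+u1)*(t - s0))*E - (L * R * v1 - L*(1+u1)*(t-0))*1)
     + ((L * R * v0 - L*(1+u0)*(t - R))*q - (L * R * v0 - L*(1+u0)*(t-s0))*E))
     + q*(1 + (u0 - L * R * v0) + L*(1+u0)*(t - R)) = 1 + (u1 - L * R * v1) + L*(1+u1)*t"
  using assms by algebra

lemma Hp_nonneg_part: "t < 0 \<Longrightarrow> Hp t = 0" by (simp add: Hp_def)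

lemma Hp_renewal: "Hp t = (if 0 \<le> t then 1 else 0) + integral\<^sup>L mu (\<lambda>y. Hp (t - y))"
proof (cases "t < 0")
  case True
  have "AE y in mu. Hp (t - y) = 0"
    using mu_AE by (rule eventually_mono) (use True in \<open>auto simp: Hp_def\<close>)
  then have "integral\<^sup>L mu (\<lambda>y. Hp (t - y)) = 0" by (rule integral_eq_zero_AE)
  then show ?thesis using True by (simp add: Hp_def)
next
  case False
  then have t0: "0 \<le> t" by simp
  define n where "n = nat \<lfloor>t / r\<rfloor>"
  define s0 where "s0 = t - real n * r"
  have nr: "real n * r \<le> t" "t < real (Suc n) * r"
  proof -
    have "real n \<le> t / r" "t / r < real n + 1" unfolding n_def using t0 rpos
      by (simp_all add: of_nat_nat)
    then show "real n * r \<le> t" "t < real (Suc n) * r" using rpos by (simp_all add: field_simps)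
  qed
  have s0: "0 \<le> s0" "s0 < r" using nr unfolding s0_def by (auto simp: algebra_simps)
  define g where "g x = l * exp (- l * x) * Hp (t - x)" for x
  have g_meas[measurable]: "g \<in> borel_measurable borel" unfolding g_def[abs_def] by measurable
  have gb: "\<bar>g x\<bar> \<le> l * Cb t" if "0 \<le> x" for x
  proof -
    have "exp (- l * x) \<le> 1" using that lpos by simp
    moreover have "\<bar>Hp (t - x)\<bar> \<le> Cb t" using that by (intro Hp_bound) simp
    ultimately have "exp (- l * x) * \<bar>Hp (t - x)\<bar> \<le> 1 * Cb t"
      by (intro mult_mono) (auto simp: Cb_nonneg)
    then show ?thesis using lpos unfolding g_def by (simp add: abs_mult mult.assoc mult_left_mono)
  qed
  have int: "interval_lebesgue_integrable lborel 0 (ereal r) g"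
  proof -
    have "set_integrable lborel {0<..<r} g"
      unfolding set_integrable_def
    proof (rule integrableI_bounded_set[where A="{0<..<r}" and B="l * Cb t"])
      show "AE x in lborel. x \<in> {0<..<r} \<longrightarrow> norm (indicator {0<..<r} x *\<^sub>R g x) \<le> l * Cb t"
        using gb by auto
    qed (use rpos in \<open>auto simp: emeasure_lborel_Ioo\<close>)
    moreover have "einterval 0 (ereal r) = {0<..<r}" by (auto simp: einterval_iff zero_ereal_def)
    ultimately show ?thesis using rpos unfolding interval_lebesgue_integrable_def by (simp add: zero_ereal_def)
  qed
  have "integral\<^sup>L mu (\<lambda>y. Hp (t - y)) = (LBINT x=0..r. g x) + exp (- l * r) * Hp (t - r)"
    unfolding g_def by (rule mu_integral[where B="Cb t"]) (auto intro: Hp_bound)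
  also have "(LBINT x=0..r. g x) = (LBINT x=0..ereal s0. g x) + (LBINT x=ereal s0..ereal r. g x)"
    by (rule interval_integral_sum[symmetric]) (use int s0 rpos in \<open>simp add: min_def max_def zero_ereal_def\<close>)
  also have "(LBINT x=0..ereal s0. g x) = (LBINT x=ereal 0..ereal s0. l * exp (- l * x) * seg n (t - x))"
    unfolding zero_ereal_def
  proof (rule interval_integral_cong)
    fix x assume "x \<in> einterval (min (ereal 0) (ereal s0)) (max (ereal 0) (ereal s0))"
    then have x: "0 < x" "x < s0" using s0 by (auto simp: einterval_iff min_def max_def)
    show "g x = l * exp (- l * x) * seg n (t - x)"
      unfolding g_def using x nr by (subst Hp_seg[of n]) (auto simp: s0_def)
  qed
  also have "\<dots> = Fs n t s0 - Fs n t 0" using s0 by (intro seg_FTC)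
  finally have I: "integral\<^sup>L mu (\<lambda>y. Hp (t - y)) = Fs n t s0 - Fs n t 0 + (LBINT x=ereal s0..ereal r. g x) + exp (- l * r) * Hp (t - r)"
    by simp
  show ?thesis
  proof (cases n)
    case 0
    have "(LBINT x=ereal s0..ereal r. g x) = (LBINT x=ereal s0..ereal r. 0)"
    proof (rule interval_integral_cong)
      fix x assume "x \<in> einterval (min (ereal s0) (ereal r)) (max (ereal s0) (ereal r))"
      then have x: "s0 < x" "x < r" using s0 by (auto simp: einterval_iff min_def max_def)
      show "g x = 0" unfolding g_def using x 0 by (simp add: s0_def Hp_def)
    qed
    moreover have "Hp (t - r) = 0" using nr 0 by (simp add: Hp_def)
    moreover have "Hp t = seg 0 t" using nr 0 Hp_seg[of 0 t] by simp
    ultimately show ?thesis using I t0 0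
      by (simp add: Fs_def seg_def uu_def vv_def s0_def)
  next
    case (Suc m)
    have "(LBINT x=ereal s0..ereal r. g x) = (LBINT x=ereal s0..ereal r. l * exp (- l * x) * seg m (t - x))"
    proof (rule interval_integral_cong)
      fix x assume "x \<in> einterval (min (ereal s0) (ereal r)) (max (ereal s0) (ereal r))"
      then have x: "s0 < x" "x < r" using s0 by (auto simp: einterval_iff min_def max_def)
      show "g x = l * exp (- l * x) * seg m (t - x)"
        unfolding g_def using x nr Suc by (subst Hp_seg[of m]) (auto simp: s0_def algebra_simps)
    qed
    also have "\<dots> = Fs m t r - Fs m t s0" using s0 by (intro seg_FTC) simp
    finally have I2: "(LBINT x=ereal s0..ereal r. g x) = Fs m t r - Fs m t s0" .
    have Ht: "Hp (t - r) = seg m (t - r)" using nr Suc by (subst Hp_seg[of m]) (auto simp: algebra_simps)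
    have Ht2: "Hp t = seg n t" using nr by (rule Hp_seg)
    have "exp (- l * r) * (1 + uu m) = uu m + exp (- l * real (Suc m) * r)"
      using uu_Suc'[of m] uu_Suc[of m] by simp
    note KA = key_alg[OF uu_Suc[of m] vv_Suc[of m] this, of t s0 r l "exp (- l * s0)"]
    show ?thesis unfolding I I2 Ht Ht2 Fs_def seg_def using t0 Suc KA
      by (simp add: s0_def)
  qed
qed

definition dd :: "real \<Rightarrow> real" where "dd s = R s - Hp s"

lemma dd_meas[measurable]: "dd \<in> borel_measurable borel" unfolding dd_def[abs_def] by measurable

lemma R_int: "integrable mu (\<lambda>y. R (t - y))"
  by (rule mu_integrable[where B="exp t / (1 - cc)"])
     (use R_nonneg R_bound cc_lt1 in \<open>auto intro!: order_trans[OF R_bound] divide_right_mono\<close>)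

lemma Hp_int: "integrable mu (\<lambda>y. Hp (t - y))"
  by (rule mu_integrable[where B="Cb t"]) (auto intro: Hp_bound)

lemma dd_renewal: "dd t = integral\<^sup>L mu (\<lambda>y. dd (t - y))"
proof -
  have "dd t = integral\<^sup>L mu (\<lambda>y. R (t - y)) - integral\<^sup>L mu (\<lambda>y. Hp (t - y))"
    unfolding dd_def using R_renewal[of t] Hp_renewal[of t] by (simp add: G_0)
  also have "\<dots> = integral\<^sup>L mu (\<lambda>y. dd (t - y))"
    unfolding dd_def by (rule Bochner_Integration.integral_diff[symmetric, OF R_int Hp_int])
  finally show ?thesis .
qed

lemma dd_bound: "s \<le> T \<Longrightarrow> \<bar>dd s\<bar> \<le> exp T / (1 - cc) + Cb T"
proof -
  assume sT: "s \<le> T"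
  have "R s \<le> exp T / (1 - cc)"
  proof -
    have "exp s / (1 - cc) \<le> exp T / (1 - cc)" using sT cc_lt1 by (intro divide_right_mono) auto
    then show ?thesis using R_bound[of s] by linarith
  qed
  then show ?thesis using R_nonneg[of s] Hp_bound[OF sT] unfolding dd_def by linarith
qed

lemma dd_G: "s \<le> T \<Longrightarrow> \<bar>dd s\<bar> \<le> (exp T / (1 - cc) + Cb T) * G k s"
proof (induction k arbitrary: s)
  case 0
  show ?case
  proof (cases "s < 0")
    case True then show ?thesis by (simp add: dd_def R_neg Hp_def G_0)
  next
    case False then show ?thesis using dd_bound[OF 0] by (simp add: G_0)
  qed
next
  case (Suc k)
  define B where "B = exp T / (1 - cc) + Cb T"
  have B0: "0 \<le> B" unfolding B_def using cc_lt1 Cb_nonneg by (simp add: add_nonneg_nonneg)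
  have "\<bar>dd s\<bar> = \<bar>integral\<^sup>L mu (\<lambda>y. dd (s - y))\<bar>" by (subst dd_renewal) simp
  also have "\<dots> \<le> integral\<^sup>L mu (\<lambda>y. norm (dd (s - y)))"
    using integral_norm_bound[of mu "\<lambda>y. dd (s - y)"] by simp
  also have "\<dots> \<le> integral\<^sup>L mu (\<lambda>y. B * G k (s - y))"
  proof (rule integral_mono_AE)
    show "integrable mu (\<lambda>y. norm (dd (s - y)))"
      by (rule mu_integrable[where B="exp s / (1 - cc) + Cb s"]) (auto intro: dd_bound)
    show "integrable mu (\<lambda>y. B * G k (s - y))"
      by (rule mu_integrable[where B=B]) (use B0 in \<open>auto simp: abs_mult G_nonneg intro: mult_right_le_one_le G_le1\<close>)
    show "AE y in mu. norm (dd (s - y)) \<le> B * G k (s - y)"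
      using mu_AE by (rule eventually_mono) (use Suc in \<open>auto simp: B_def\<close>)
  qed
  also have "\<dots> = B * G (Suc k) s" by (simp add: G_Suc)
  finally show ?case unfolding B_def .
qed

lemma R_eq_Hp: "R s = Hp s"
proof -
  define B where "B = exp s / (1 - cc) + Cb s"
  have lim: "(\<lambda>k. B * (exp s * cc ^ k)) \<longlonglongrightarrow> 0"
    using cc_nonneg cc_lt1 by (auto intro!: tendsto_eq_intros LIMSEQ_power_zero)
  have "\<bar>dd s\<bar> \<le> B * (exp s * cc ^ k)" for k
  proof -
    have B0: "0 \<le> B" unfolding B_def using cc_lt1 Cb_nonneg by (simp add: add_nonneg_nonneg)
    have "\<bar>dd s\<bar> \<le> B * G k s" unfolding B_def by (rule dd_G) simp
    also have "\<dots> \<le> B * (exp s * cc ^ k)" using B0 G_bound[of k s] by (intro mult_left_mono)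
    finally show ?thesis .
  qed
  then have "\<bar>dd s\<bar> \<le> 0" by (intro LIMSEQ_le_const[OF lim]) auto
  then show ?thesis unfolding dd_def by simp
qed

lemma raft_eq: "raft_count X r t \<omega> = Max {n. S n \<omega> \<le> t}"
  by (simp add: raft_count_def S_def Y_def)

lemma Max_inf: "\<not> finite (A::nat set) \<Longrightarrow> Max A = Max (UNIV::nat set)"
  by (simp add: Max.eq_fold')

lemma raft_meas:
  assumes t0: "0 \<le> t"
  shows "(\<lambda>\<omega>. raft_count X r t \<omega>) \<in> measurable M (count_space UNIV)"
  unfolding measurable_count_space_eq2_countable
proof safe
  fix j :: nat
  have "(\<lambda>\<omega>. raft_count X r t \<omega>) -` {j} \<inter> space M =
    {\<omega>\<in>space M. ((\<exists>m. \<forall>n. S n \<omega> \<le> t \<longrightarrow> n \<le> m) \<and> S j \<omega> \<le> t \<and> (\<forall>n. S n \<omega> \<le> t \<longrightarrow> n \<le> j))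
        \<or> (\<not> (\<exists>m. \<forall>n. S n \<omega> \<le> t \<longrightarrow> n \<le> m) \<and> Max (UNIV::nat set) = j)}"
  proof (intro set_eqI iffI)
    fix \<omega> assume \<omega>: "\<omega> \<in> (\<lambda>\<omega>. raft_count X r t \<omega>) -` {j} \<inter> space M"
    define A where "A = {n. S n \<omega> \<le> t}"
    have A0: "0 \<in> A" unfolding A_def using t0 by (simp add: S_def)
    show "\<omega> \<in> {\<omega>\<in>space M. ((\<exists>m. \<forall>n. S n \<omega> \<le> t \<longrightarrow> n \<le> m) \<and> S j \<omega> \<le> t \<and> (\<forall>n. S n \<omega> \<le> t \<longrightarrow> n \<le> j))
        \<or> (\<not> (\<exists>m. \<forall>n. S n \<omega> \<le> t \<longrightarrow> n \<le> m) \<and> Max (UNIV::nat set) = j)}"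
    proof (cases "finite A")
      case True
      then have "Max A = j" using \<omega> by (simp add: raft_eq A_def)
      then have "j \<in> A \<and> (\<forall>a\<in>A. a \<le> j)" using True A0 by (subst (asm) Max_eq_iff) auto
      then show ?thesis using \<omega> unfolding A_def by auto
    next
      case False
      then have "Max A = j" using \<omega> by (simp add: raft_eq A_def)
      then show ?thesis using False \<omega> Max_inf[OF False] unfolding A_def
        by (auto simp: finite_nat_set_iff_bounded_le)
    qed
  next
    fix \<omega> assume \<omega>: "\<omega> \<in> {\<omega>\<in>space M. ((\<exists>m. \<forall>n. S n \<omega> \<le> t \<longrightarrow> n \<le> m) \<and> S j \<omega> \<le> t \<and> (\<forall>n. S n \<omega> \<le> t \<longrightarrow> n \<le> j))
        \<or> (\<not> (\<exists>m. \<forall>n. S n \<omega> \<le> t \<longrightarrow> n \<le> m) \<and> Max (UNIV::nat set) = j)}"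
    define A where "A = {n. S n \<omega> \<le> t}"
    have A0: "0 \<in> A" unfolding A_def using t0 by (simp add: S_def)
    show "\<omega> \<in> (\<lambda>\<omega>. raft_count X r t \<omega>) -` {j} \<inter> space M"
    proof (cases "finite A")
      case True
      then have "j \<in> A \<and> (\<forall>a\<in>A. a \<le> j)" using \<omega> unfolding A_def by (auto simp: finite_nat_set_iff_bounded_le)
      then have "Max A = j" using True A0 by (subst Max_eq_iff) auto
      then show ?thesis using \<omega> by (simp add: raft_eq A_def)
    next
      case False
      then have "Max (UNIV::nat set) = j" using \<omega> unfolding A_def by (auto simp: finite_nat_set_iff_bounded_le)
      then show ?thesis using \<omega> Max_inf[OF False] by (simp add: raft_eq A_def)
    qed
  qed
  also have "\<dots> \<in> sets M" by measurable
  finally show "(\<lambda>\<omega>. raft_count X r t \<omega>) -` {j} \<inter> space M \<in> sets M" .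
qed simp

lemma X_pos_AE: "AE \<omega> in M. \<forall>k. 1 \<le> k \<longrightarrow> 0 < X k \<omega>"
  unfolding AE_all_countable
proof
  fix k :: nat
  show "AE \<omega> in M. 1 \<le> k \<longrightarrow> 0 < X k \<omega>"
  proof (cases "1 \<le> k")
    case True
    have "prob {\<omega>\<in>space M. X k \<omega> \<le> 0} = 1 - exp (- 0 * l)"
      by (rule exponential_distributedD_le[OF distr[OF True]]) (use lpos in auto)
    then have "emeasure M {\<omega>\<in>space M. X k \<omega> \<le> 0} = 0"
      by (simp add: emeasure_eq_measure)
    then have "AE \<omega> in M. 0 < X k \<omega>"
      by (intro AE_I[where N="{\<omega>\<in>space M. X k \<omega> \<le> 0}"]) (use True in auto)
    then show ?thesis by auto
  qed simp
qed

lemma fin_AE: "AE \<omega> in M. \<exists>m. t < S m \<omega>"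
proof -
  define N0 where "N0 = {\<omega>\<in>space M. \<forall>m. S m \<omega> \<le> t}"
  have N0[measurable]: "N0 \<in> sets M" unfolding N0_def by measurable
  have bound: "prob N0 \<le> exp t * cc ^ m" for m
  proof -
    have "prob N0 \<le> G m t" unfolding G_def N0_def by (rule finite_measure_mono) auto
    then show ?thesis using G_bound[of m t] by linarith
  qed
  moreover have lim: "(\<lambda>m. exp t * cc ^ m) \<longlonglongrightarrow> 0"
    using cc_nonneg cc_lt1 by (auto intro!: tendsto_eq_intros LIMSEQ_power_zero)
  have "prob N0 \<le> 0" by (rule LIMSEQ_le_const[OF lim]) (use bound in auto)
  then have "emeasure M N0 = 0" by (simp add: emeasure_eq_measure measure_le_0_iff)
  then show ?thesis
    by (intro AE_I[where N=N0]) (auto simp: N0_def not_less)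
qed

lemma raft_sum:
  assumes t0: "0 \<le> t" and pos: "\<forall>k. 1 \<le> k \<longrightarrow> 0 < X k \<omega>" and fin: "\<exists>m. t < S m \<omega>"
    and that: "\<omega> \<in> space M"
  shows "ennreal (real (raft_count X r t \<omega>)) = (\<Sum>m. indicator {\<omega>\<in>space M. S (Suc m) \<omega> \<le> t} \<omega>)"
proof -
  define A where "A = {n. S n \<omega> \<le> t}"
  have Smono: "S n \<omega> \<le> S n' \<omega>" if "n \<le> n'" for n n'
  proof -
    have "S n' \<omega> = S n \<omega> + (\<Sum>i\<in>{Suc n..n'}. Y i \<omega>)"
      unfolding S_def using that by (subst sum.union_disjoint[symmetric]) (auto intro!: sum.cong)
    moreover have "0 \<le> (\<Sum>i\<in>{Suc n..n'}. Y i \<omega>)"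
    proof (intro sum_nonneg)
      fix i assume "i \<in> {Suc n..n'}"
      then have "0 < X i \<omega>" using pos by auto
      then show "0 \<le> Y i \<omega>" using rpos by (simp add: Y_def)
    qed
    ultimately show ?thesis by simp
  qed
  obtain m where m: "t < S m \<omega>" using fin by auto
  have Asub: "A \<subseteq> {..<m}"
  proof
    fix n assume "n \<in> A"
    then have "S n \<omega> \<le> t" by (simp add: A_def)
    then show "n \<in> {..<m}" using m Smono[of m n] by (cases "m \<le> n") auto
  qed
  have finA: "finite A" using Asub finite_subset by blast
  have A0: "0 \<in> A" unfolding A_def using t0 by (simp add: S_def)
  define K where "K = Max A"
  have KA: "K \<in> A" unfolding K_def using finA A0 by (intro Max_in) auto
  have A_eq: "n \<in> A \<longleftrightarrow> n \<le> K" for n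
  proof
    assume "n \<in> A" then show "n \<le> K" unfolding K_def using finA by simp
  next
    assume "n \<le> K" then show "n \<in> A" using KA Smono[of n K] unfolding A_def by auto
  qed
  have "(\<Sum>m. indicator {\<omega>\<in>space M. S (Suc m) \<omega> \<le> t} \<omega> :: ennreal)
      = (\<Sum>m\<in>{..<K}. indicator {\<omega>\<in>space M. S (Suc m) \<omega> \<le> t} \<omega>)"
  proof (rule suminf_finite)
    fix n assume "n \<notin> {..<K}"
    then have "Suc n \<notin> A" using A_eq[of "Suc n"] by simp
    then show "indicator {\<omega>\<in>space M. S (Suc n) \<omega> \<le> t} \<omega> = (0::ennreal)"
      by (simp add: A_def indicator_def)
  qed simp
  also have "\<dots> = (\<Sum>m\<in>{..<K}. 1)"
  proof (rule sum.cong)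
    fix n assume "n \<in> {..<K}"
    then have "Suc n \<in> A" using A_eq[of "Suc n"] by simp
    then show "indicator {\<omega>\<in>space M. S (Suc n) \<omega> \<le> t} \<omega> = (1 :: ennreal)"
      using that by (simp add: A_def indicator_def)
  qed simp
  finally have "(\<Sum>m. indicator {\<omega>\<in>space M. S (Suc m) \<omega> \<le> t} \<omega> :: ennreal) = of_nat K"
    by simp
  moreover have "raft_count X r t \<omega> = K" by (simp add: raft_eq K_def A_def)
  ultimately show ?thesis by (simp add: ennreal_of_nat_eq_real_of_nat)
qed

lemma expectation_raft:
  assumes t0: "0 \<le> t"
  shows "expectation (\<lambda>\<omega>. real (raft_count X r t \<omega>)) = Hp t - 1"
proof -
  have meas[measurable]: "(\<lambda>\<omega>. real (raft_count X r t \<omega>)) \<in> borel_measurable M"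
    using raft_meas[OF t0] by (rule measurable_compose) simp
  have sets[measurable]: "{\<omega>\<in>space M. S (Suc m) \<omega> \<le> t} \<in> sets M" for m by measurable
  have "(\<integral>\<^sup>+\<omega>. ennreal (real (raft_count X r t \<omega>)) \<partial>M)
      = (\<integral>\<^sup>+\<omega>. (\<Sum>m. indicator {\<omega>\<in>space M. S (Suc m) \<omega> \<le> t} \<omega>) \<partial>M)"
  proof (rule nn_integral_cong_AE)
    show "AE \<omega> in M. ennreal (real (raft_count X r t \<omega>)) = (\<Sum>m. indicator {\<omega>\<in>space M. S (Suc m) \<omega> \<le> t} \<omega>)"
      using X_pos_AE fin_AE[of t] AE_space by eventually_elim (rule raft_sum[OF t0])
  qed
  also have "\<dots> = (\<Sum>m. emeasure M {\<omega>\<in>space M. S (Suc m) \<omega> \<le> t})"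
    by (subst nn_integral_suminf) auto
  also have "\<dots> = (\<Sum>m. ennreal (G (Suc m) t))"
    unfolding G_def by (simp add: emeasure_eq_measure)
  also have "\<dots> = ennreal (\<Sum>m. G (Suc m) t)"
    using G_summable[of t] summable_Suc_iff[of "\<lambda>k. G k t"] by (intro suminf_ennreal2) (auto simp: G_nonneg)
  also have "(\<Sum>m. G (Suc m) t) = R t - 1"
    unfolding R_def using suminf_split_head[OF G_summable[of t]] t0 by (simp add: G_0)
  finally have nn: "(\<integral>\<^sup>+\<omega>. ennreal (real (raft_count X r t \<omega>)) \<partial>M) = ennreal (R t - 1)" .
  have "R t - 1 \<ge> 0"
    using suminf_split_head[OF G_summable[of t]] t0 suminf_nonneg[of "\<lambda>m. G (Suc m) t"]
      G_summable[of t] summable_Suc_iff[of "\<lambda>k. G k t"] unfolding R_def by (simp add: G_0 G_nonneg)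
  then have "expectation (\<lambda>\<omega>. real (raft_count X r t \<omega>)) = R t - 1"
    by (subst integral_eq_nn_integral) (auto simp: nn)
  then show ?thesis by (simp add: R_eq_Hp)
qed

end

lemma uu_closed:
  fixes l r :: real and n :: nat
  assumes q: "exp (- l * r) \<noteq> 1"
  shows "(\<Sum>k\<in>{1..n}. exp (- l * real k * r)) = exp (- l * r) / (1 - exp (- l * r)) * (1 - exp (- l * real n * r))"
proof (induction n)
  case 0 then show ?case by simp
next
  case (Suc n)
  have e: "exp (- l * real (Suc n) * r) = exp (- l * r) * exp (- l * real n * r)"
    by (simp add: mult_exp_exp algebra_simps)
  have q': "1 - exp (- l * r) \<noteq> 0" using q by simp
  have alg: "Q / (1 - Q) * (1 - E) + Q * E = Q / (1 - Q) * (1 - Q * E)" if "1 - Q \<noteq> 0" for Q E :: real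
    using that by (simp add: divide_simps) (simp add: algebra_simps)
  have e2: "exp (- (l * (1 + real n) * r)) = exp (- (l * r)) * exp (- (l * real n * r))"
    by (simp add: mult_exp_exp algebra_simps)
  show ?case using Suc alg[OF q', of "exp (- (l * real n * r))"] by (simp add: e2)
qed

lemma vv_closed:
  fixes l r :: real and n :: nat
  assumes q: "exp (- l * r) \<noteq> 1"
  shows "(\<Sum>k\<in>{1..n}. real k * exp (- l * real k * r)) = exp (- l * r) / (1 - exp (- l * r))^2
             * (1 - real (n + 1) * exp (- l * real n * r) + real n * exp (- l * real (n + 1) * r))"
proof (induction n)
  case 0 then show ?case by simp
next
  case (Suc n)
  have e: "exp (- l * real (Suc n) * r) = exp (- l * r) * exp (- l * real n * r)" for n
    by (simp add: mult_exp_exp algebra_simps)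
  have e2: "exp (- (l * (1 + real n) * r)) = exp (- (l * r)) * exp (- (l * real n * r))"
    by (simp add: mult_exp_exp algebra_simps)
  have e3: "exp (- (l * (2 + real n) * r)) = exp (- (l * r)) * (exp (- (l * r)) * exp (- (l * real n * r)))"
    by (simp add: mult_exp_exp algebra_simps)
  have e4: "exp (- (l * (real n + 2) * r)) = exp (- (l * r)) * (exp (- (l * r)) * exp (- (l * real n * r)))"
    by (simp add: mult_exp_exp algebra_simps)
  have q': "1 - exp (- l * r) \<noteq> 0" using q by simp
  have alg: "Q / (1 - Q)^2 * (1 - (N + 1) * E + N * (Q * E)) + (N + 1) * (Q * E)
      = Q / (1 - Q)^2 * (1 - (N + 2) * (Q * E) + (N + 1) * (Q * (Q * E)))" if "1 - Q \<noteq> 0" for Q E N :: real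
    using that by (simp add: divide_simps) (simp add: algebra_simps power2_eq_square)
  have "(\<Sum>k\<in>{1..Suc n}. real k * exp (- l * real k * r)) = 
     (\<Sum>k\<in>{1..n}. real k * exp (- l * real k * r)) + real (Suc n) * exp (- l * real (Suc n) * r)" by simp
  also have "\<dots> = exp (- l * r) / (1 - exp (- l * r))^2 * (1 - (real n + 1) * exp (- l * real n * r) + real n * (exp (- l * r) * exp (- l * real n * r)))
       + (real n + 1) * (exp (- l * r) * exp (- l * real n * r))"
    using Suc by (simp add: e2 add.commute)
  also have "\<dots> = exp (- l * r) / (1 - exp (- l * r))^2 * (1 - (real n + 2) * (exp (- l * r) * exp (- l * real n * r)) + (real n + 1) * (exp (- l * r) * (exp (- l * r) * exp (- l * real n * r))))"
    by (rule alg[OF q'])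
  also have "\<dots> = exp (- l * r) / (1 - exp (- l * r))^2
             * (1 - real (Suc n + 1) * exp (- l * real (Suc n) * r) + real (Suc n) * exp (- l * real (Suc n + 1) * r))"
    by (simp add: e2 e3 e4 add.commute)
  finally show ?case .
qed

theorem mainTheorem8:
  fixes M :: "'a measure" and X :: "nat \<Rightarrow> 'a \<Rightarrow> real"
    and l r t :: real and n :: nat
  assumes "prob_space M"
    and "prob_space.indep_vars M (\<lambda>_. borel) X {1..}"
    and "\<And>k. k \<ge> 1 \<Longrightarrow> distributed M lborel (X k) (exponential_density l)"
    and "l > 0" and "r > 0"
    and "n \<ge> 1" and "real n * r \<le> t" and "t < real (n + 1) * r"
  shows "prob_space.expectation M (\<lambda>\<omega>. real (raft_count X r t \<omega>)) / t
           = l * (1 + (\<Sum>k\<in>{1..n}. exp (- l * real k * r)))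
             + ((\<Sum>k\<in>{1..n}. exp (- l * real k * r))
                - l * r * (\<Sum>k\<in>{1..n}. real k * exp (- l * real k * r))) / t
       \<and> (\<Sum>k\<in>{1..n}. exp (- l * real k * r))
           = exp (- l * r) / (1 - exp (- l * r)) * (1 - exp (- l * real n * r))
       \<and> (\<Sum>k\<in>{1..n}. real k * exp (- l * real k * r))
           = exp (- l * r) / (1 - exp (- l * r))^2
             * (1 - real (n + 1) * exp (- l * real n * r) + real n * exp (- l * real (n + 1) * r))"
proof -
  interpret R: raft M X l r
    unfolding raft_def raft_axioms_def using assms(1-5) by blast
  have q: "exp (- l * r) \<noteq> 1" using assms by simp
  have "0 < real n * r" using assms by simp
  then have tpos: "0 < t" using assms by linarith
  have E: "R.expectation (\<lambda>\<omega>. real (raft_count X r t \<omega>)) = R.Hp t - 1"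
    using tpos by (intro R.expectation_raft) simp
  have H: "R.Hp t = R.seg n t" using assms by (intro R.Hp_seg) simp_all
  have "R.expectation (\<lambda>\<omega>. real (raft_count X r t \<omega>)) / t
      = (R.uu n - l * r * R.vv n + l * (1 + R.uu n) * t) / t"
    unfolding E H R.seg_def by simp
  also have "\<dots> = l * (1 + R.uu n) + (R.uu n - l * r * R.vv n) / t"
    using tpos by (simp add: add_divide_distrib)
  finally have main: "R.expectation (\<lambda>\<omega>. real (raft_count X r t \<omega>)) / t = l * (1 + R.uu n) + (R.uu n - l * r * R.vv n) / t" .
  show ?thesis
  proof (intro conjI)
    show "R.expectation (\<lambda>\<omega>. real (raft_count X r t \<omega>)) / t
           = l * (1 + (\<Sum>k\<in>{1..n}. exp (- l * real k * r)))
             + ((\<Sum>k\<in>{1..n}. exp (- l * real k * r))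
                - l * r * (\<Sum>k\<in>{1..n}. real k * exp (- l * real k * r))) / t"
      using main unfolding R.uu_def R.vv_def .
  qed (rule uu_closed[OF q], rule vv_closed[OF q])
qed

end
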